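(* Let $G=([n],E)$ be an oriented graph with $|\mathcal{P}(G)|\ge 1$ and associated poset $P=([n],\le_G)$. If $\dim P\ge 3$, then \[\max_{\sigma,\rho\in\mathcal{P}(G)} d_K(\sigma,\rho)<|I(P)|.\]
   Context: Write a permutation $\sigma\in S_n$ as $\sigma=\sigma_1\cdots\sigma_n$. A permutation $\sigma$ satisfies an oriented graph $G=([n],E)$ if $\sigma_u>\sigma_v$ for every oriented edge $u\to v\in E$; $\mathcal{P}(G)$ is the set of permutations satisfying $G$. Write $u\rightsquigarrow v$ if there is an oriented path from $u$ to $v$ in $G$. The poset $P=([n],\le_G)$ is defined by $a\le_G b$ iff $a\rightsquigarrow b$ or $a=b$. The dimension $\dim P$ is the smallest number of total orders on $[n]$ whose intersection is $\le_G$. $I(P)=\{(i,j): i<j,\ i\not\rightsquigarrow j,\ j\not\rightsquigarrow i\}$. For $\sigma,\rho\in S_n$, a pair $i<j$ is discordant if $(\sigma_i-\sigma_j)(\rho_i-\rho_j)<0$; $d_K(\sigma,\rho)$ is the number of discordant pairs. *)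

theory Defs
  imports "HOL-Combinatorics.Permutations"
begin

definition oriented_graph :: "nat \<Rightarrow> (nat \<times> nat) set \<Rightarrow> bool" where
  "oriented_graph n E \<longleftrightarrow> E \<subseteq> {1..n} \<times> {1..n}
     \<and> (\<forall>u. (u, u) \<notin> E) \<and> (\<forall>u v. (u, v) \<in> E \<longrightarrow> (v, u) \<notin> E)"

definition satisfying_perms :: "nat \<Rightarrow> (nat \<times> nat) set \<Rightarrow> (nat \<Rightarrow> nat) set" where
  "satisfying_perms n E = {\<sigma>. \<sigma> permutes {1..n} \<and> (\<forall>(u, v) \<in> E. \<sigma> u > \<sigma> v)}"

definition poset_le :: "nat \<Rightarrow> (nat \<times> nat) set \<Rightarrow> (nat \<times> nat) set" where
  "poset_le n E = {(a, b). a \<in> {1..n} \<and> b \<in> {1..n} \<and> (a = b \<or> (a, b) \<in> E\<^sup>+)}"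

definition order_dim :: "'a set \<Rightarrow> 'a rel \<Rightarrow> nat" where
  "order_dim A r = (LEAST k. \<exists>\<R>. finite \<R> \<and> card \<R> = k \<and>
      (\<forall>L \<in> \<R>. linear_order_on A L) \<and> \<Inter>\<R> = r)"

definition incomp_pairs :: "nat \<Rightarrow> (nat \<times> nat) set \<Rightarrow> (nat \<times> nat) set" where
  "incomp_pairs n E = {(i, j). i \<in> {1..n} \<and> j \<in> {1..n} \<and> i < j
      \<and> (i, j) \<notin> E\<^sup>+ \<and> (j, i) \<notin> E\<^sup>+}"

definition kendall_dist :: "nat \<Rightarrow> (nat \<Rightarrow> nat) \<Rightarrow> (nat \<Rightarrow> nat) \<Rightarrow> nat" where
  "kendall_dist n \<sigma> \<rho> = card {(i, j). i \<in> {1..n} \<and> j \<in> {1..n} \<and> i < j \<and>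
      (int (\<sigma> i) - int (\<sigma> j)) * (int (\<rho> i) - int (\<rho> j)) < 0}"

end

theory Submission
  imports Defs
begin

lemma trancl_gt:
  assumes "\<forall>(u, v) \<in> E. \<sigma> u > (\<sigma> v::nat)" and "(a, b) \<in> E\<^sup>+"
  shows "\<sigma> a > \<sigma> b"
  using assms(2)
proof (induction rule: trancl_induct)
  case (base y) then show ?case using assms(1) by auto
next
  case (step y z) then show ?case using assms(1) by fastforce
qed

lemma lin_ord:
  assumes "\<sigma> permutes {1..n}"
  shows "linear_order_on {1..n} {(a, b). a \<in> {1..n} \<and> b \<in> {1..n} \<and> \<sigma> a \<ge> (\<sigma> b::nat)}"
proof -
  have inj: "inj \<sigma>" using assms permutes_inj by blast
  show ?thesis
    unfolding linear_order_on_def partial_order_on_def preorder_on_def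
  proof (intro conjI)
    show "refl_on {1..n} {(a, b). a \<in> {1..n} \<and> b \<in> {1..n} \<and> \<sigma> a \<ge> (\<sigma> b::nat)}"
      unfolding refl_on_def by auto
    show "trans {(a, b). a \<in> {1..n} \<and> b \<in> {1..n} \<and> \<sigma> a \<ge> (\<sigma> b::nat)}"
      unfolding trans_def by auto
    show "antisym {(a, b). a \<in> {1..n} \<and> b \<in> {1..n} \<and> \<sigma> a \<ge> (\<sigma> b::nat)}"
      unfolding antisym_def using inj by (auto simp: inj_eq)
    show "total_on {1..n} {(a, b). a \<in> {1..n} \<and> b \<in> {1..n} \<and> \<sigma> a \<ge> (\<sigma> b::nat)}"
      unfolding total_on_def by auto
  qed auto
qed

theorem mainTheorem10:
  fixes n :: nat and E :: "(nat \<times> nat) set"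
  assumes "oriented_graph n E"
    and "card (satisfying_perms n E) \<ge> 1"
    and "order_dim {1..n} (poset_le n E) \<ge> 3"
  shows "Max {kendall_dist n \<sigma> \<rho> | \<sigma> \<rho>. \<sigma> \<in> satisfying_perms n E \<and> \<rho> \<in> satisfying_perms n E}
           < card (incomp_pairs n E)"
proof -
  let ?S = "satisfying_perms n E"
  let ?K = "{kendall_dist n \<sigma> \<rho> | \<sigma> \<rho>. \<sigma> \<in> ?S \<and> \<rho> \<in> ?S}"
  have "card ?S > 0" using assms(2) by simp
  then have finS: "finite ?S" and neS: "?S \<noteq> {}" unfolding card_gt_0_iff by auto
  have "?K = (\<lambda>(\<sigma>, \<rho>). kendall_dist n \<sigma> \<rho>) ` (?S \<times> ?S)" by auto
  then have finK: "finite ?K" using finS by simp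
  have neK: "?K \<noteq> {}" using neS by auto
  obtain \<sigma> \<rho> where s: "\<sigma> \<in> ?S" and r: "\<rho> \<in> ?S" and M: "Max ?K = kendall_dist n \<sigma> \<rho>"
    using Max_in[OF finK neK] by auto
  have sp: "\<sigma> permutes {1..n}" and se: "\<forall>(u, v) \<in> E. \<sigma> u > \<sigma> v"
    using s unfolding satisfying_perms_def by auto
  have rp: "\<rho> permutes {1..n}" and re: "\<forall>(u, v) \<in> E. \<rho> u > \<rho> v"
    using r unfolding satisfying_perms_def by auto
  have injs: "inj \<sigma>" using sp permutes_inj by blast
  have injr: "inj \<rho>" using rp permutes_inj by blast
  define D where "D = {(i, j). i \<in> {1..n} \<and> j \<in> {1..n} \<and> i < j \<and>
      (int (\<sigma> i) - int (\<sigma> j)) * (int (\<rho> i) - int (\<rho> j)) < 0}"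
  have finI: "finite (incomp_pairs n E)"
    by (rule finite_subset[of _ "{1..n} \<times> {1..n}"]) (auto simp: incomp_pairs_def)
  have DI: "D \<subseteq> incomp_pairs n E"
  proof
    fix x assume "x \<in> D"
    then obtain i j where x: "x = (i, j)" and ij: "i \<in> {1..n}" "j \<in> {1..n}" "i < j"
      and p: "(int (\<sigma> i) - int (\<sigma> j)) * (int (\<rho> i) - int (\<rho> j)) < 0"
      unfolding D_def by auto
    have "(i, j) \<notin> E\<^sup>+"
    proof
      assume "(i, j) \<in> E\<^sup>+"
      then have "\<sigma> i > \<sigma> j" "\<rho> i > \<rho> j" using trancl_gt[OF se] trancl_gt[OF re] by auto
      then have "int (\<sigma> i) - int (\<sigma> j) > 0" "int (\<rho> i) - int (\<rho> j) > 0" by auto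
      then show False using p mult_pos_pos by (metis not_less_iff_gr_or_eq)
    qed
    moreover have "(j, i) \<notin> E\<^sup>+"
    proof
      assume "(j, i) \<in> E\<^sup>+"
      then have "\<sigma> j > \<sigma> i" "\<rho> j > \<rho> i" using trancl_gt[OF se] trancl_gt[OF re] by auto
      then have "int (\<sigma> i) - int (\<sigma> j) < 0" "int (\<rho> i) - int (\<rho> j) < 0" by auto
      then show False using p mult_neg_neg by (metis not_less_iff_gr_or_eq)
    qed
    ultimately show "x \<in> incomp_pairs n E" using x ij unfolding incomp_pairs_def by auto
  qed
  have le: "kendall_dist n \<sigma> \<rho> \<le> card (incomp_pairs n E)"
    unfolding kendall_dist_def D_def[symmetric] using DI finI by (rule card_mono[rotated])
  have "kendall_dist n \<sigma> \<rho> \<noteq> card (incomp_pairs n E)"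
  proof
    assume eq: "kendall_dist n \<sigma> \<rho> = card (incomp_pairs n E)"
    have DeqI: "D = incomp_pairs n E"
      using card_subset_eq[OF finI DI] eq unfolding kendall_dist_def D_def by simp
    define Ls where "Ls = {(a, b). a \<in> {1..n} \<and> b \<in> {1..n} \<and> \<sigma> a \<ge> \<sigma> b}"
    define Lr where "Lr = {(a, b). a \<in> {1..n} \<and> b \<in> {1..n} \<and> \<rho> a \<ge> \<rho> b}"
    have inter: "\<Inter>{Ls, Lr} = poset_le n E"
    proof (rule set_eqI, rule iffI)
      fix x assume "x \<in> poset_le n E"
      then obtain a b where x: "x = (a, b)" and ab: "a \<in> {1..n}" "b \<in> {1..n}"
        and c: "a = b \<or> (a, b) \<in> E\<^sup>+" unfolding poset_le_def by auto
      show "x \<in> \<Inter>{Ls, Lr}"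
        using c trancl_gt[OF se, of a b] trancl_gt[OF re, of a b] x ab
        unfolding Ls_def Lr_def by auto
    next
      fix x assume "x \<in> \<Inter>{Ls, Lr}"
      then obtain a b where x: "x = (a, b)" and ab: "a \<in> {1..n}" "b \<in> {1..n}"
        and g: "\<sigma> a \<ge> \<sigma> b" "\<rho> a \<ge> \<rho> b" unfolding Ls_def Lr_def by auto
      show "x \<in> poset_le n E"
      proof (cases "a = b \<or> (a, b) \<in> E\<^sup>+")
        case True then show ?thesis using x ab unfolding poset_le_def by auto
      next
        case False
        then have ne: "a \<noteq> b" and nab: "(a, b) \<notin> E\<^sup>+" by auto
        have gs: "\<sigma> a > \<sigma> b" proof -
          have "\<sigma> a \<noteq> \<sigma> b" using ne injs by (simp add: inj_eq)
          then show ?thesis using g(1) by linarith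
        qed
        have gr: "\<rho> a > \<rho> b" proof -
          have "\<rho> a \<noteq> \<rho> b" using ne injr by (simp add: inj_eq)
          then show ?thesis using g(2) by linarith
        qed
        have nba: "(b, a) \<notin> E\<^sup>+" using trancl_gt[OF se, of b a] gs by auto
        show ?thesis
        proof (cases "a < b")
          case True
          then have "(a, b) \<in> incomp_pairs n E" using ab nab nba unfolding incomp_pairs_def by auto
          then have "(a, b) \<in> D" using DeqI by simp
          then have p: "(int (\<sigma> a) - int (\<sigma> b)) * (int (\<rho> a) - int (\<rho> b)) < 0"
            unfolding D_def by auto
          have "int (\<sigma> a) - int (\<sigma> b) > 0" "int (\<rho> a) - int (\<rho> b) > 0" using gs gr by auto
          then show ?thesis using p mult_pos_pos by (metis not_less_iff_gr_or_eq)
        next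
          case False
          then have "b < a" using ne by simp
          then have "(b, a) \<in> incomp_pairs n E" using ab nab nba unfolding incomp_pairs_def by auto
          then have "(b, a) \<in> D" using DeqI by simp
          then have p: "(int (\<sigma> b) - int (\<sigma> a)) * (int (\<rho> b) - int (\<rho> a)) < 0"
            unfolding D_def by auto
          have "int (\<sigma> b) - int (\<sigma> a) < 0" "int (\<rho> b) - int (\<rho> a) < 0" using gs gr by auto
          then show ?thesis using p mult_neg_neg by (metis not_less_iff_gr_or_eq)
        qed
      qed
    qed
    have lins: "\<forall>L \<in> {Ls, Lr}. linear_order_on {1..n} L"
      using lin_ord[OF sp] lin_ord[OF rp] unfolding Ls_def Lr_def by auto
    have "order_dim {1..n} (poset_le n E) \<le> card {Ls, Lr}"
      unfolding order_dim_def
      by (rule Least_le, rule exI[of _ "{Ls, Lr}"]) (use lins inter in simp)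
    also have "\<dots> \<le> 2" by (simp add: card_insert_le_m1)
    finally show False using assms(3) by simp
  qed
  with le M show ?thesis by simp
qed

end
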